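(* Let $k\ge2$, let $n_1,\dots,n_m$ be positive reals and $n=n_1+\cdots+n_m$. Let $F_k(x)=\left(\frac nk x\right)^{\frac1{k-1}}$ for $x\in[0,\frac kn]$ and $F_k(x)=1$ for $x>\frac kn$. In the $m$-group auction described in the context, suppose each of the $k-1$ disadvantaged bidders, independently, bids $n_i b_i$ on group $i$, where $(b_1,\dots,b_m)$ is drawn from an $m$-dimensional distribution such that each $b_i$ has cumulative distribution function $F_k$ and $n_1b_1+\cdots+n_mb_m=1$. Then the maximum over strategies of the adversary ${\mathcal A}$ of the expected number of objects won by ${\mathcal A}$ equals $n/k$.
   Context: $m$-group auction model: objects are divided into $m$ groups, group $i$ containing $n_i$ objects ($n_i$ a positive real, interpreted as the value of the group); the total number of objects is $n=\sum_i n_i$. There are $k$ bidders: an adversary ${\mathcal A}$ and $k-1$ disadvantaged bidders; each has budget $1$ and submits simultaneously nonnegative bids for the $m$ groups with total at most $1$. The highest bidder on a group obtains all $n_i$ objects in it; if $j$ bidders tie for the highest bid, each wins the group with probability $1/j$. ${\mathcal A}$ knows the disadvantaged bidders' bidding algorithm but not their realized bids; his bids are independent of theirs. *)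

theory Defs
  imports "HOL-Probability.Probability"
begin

definition Fk :: "nat \<Rightarrow> real \<Rightarrow> real \<Rightarrow> real" where
  "Fk k n x = (if x < 0 then 0
               else if x \<le> real k / n then (n / real k * x) powr (1 / (real k - 1))
               else 1)"

text \<open>Probability that the adversary, bidding a, wins a group against r other bids
  bids 0, ..., bids (r-1), with uniform tie-breaking among the highest bidders.\<close>
definition win_share :: "nat \<Rightarrow> real \<Rightarrow> (nat \<Rightarrow> real) \<Rightarrow> real" where
  "win_share r a bids =
     (if (\<forall>j<r. bids j \<le> a) then 1 / (1 + real (card {j. j < r \<and> bids j = a})) else 0)"

text \<open>Expected number of objects won by the adversary with pure bid vector a, when each
  of the k-1 disadvantaged bidders independently draws b from D and bids nv i * b i on group i.\<close>
definition expected_objects ::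
  "nat \<Rightarrow> ('m::finite \<Rightarrow> real) \<Rightarrow> ('m \<Rightarrow> real) measure \<Rightarrow> ('m \<Rightarrow> real) \<Rightarrow> real" where
  "expected_objects k nv D a =
     (\<integral>\<omega>. (\<Sum>i\<in>UNIV. nv i * win_share (k - 1) (a i) (\<lambda>j. nv i * \<omega> j i))
        \<partial>(PiM {..<k - 1} (\<lambda>_. D)))"

definition feasible_bid :: "('m::finite \<Rightarrow> real) \<Rightarrow> bool" where
  "feasible_bid a \<longleftrightarrow> (\<forall>i. 0 \<le> a i) \<and> (\<Sum>i\<in>UNIV. a i) \<le> 1"

definition adversary_strategy :: "('m::finite \<Rightarrow> real) measure \<Rightarrow> bool" where
  "adversary_strategy A \<longleftrightarrow> prob_space A \<and> sets A = sets (PiM UNIV (\<lambda>_::'m. borel))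
      \<and> (AE a in A. feasible_bid a)"

end

theory Submission
  imports Defs
begin

lemma Fk_alt:
  assumes "k \<ge> 2" "n > 0"
  shows "Fk k n x = (min 1 (max 0 (n / real k * x))) powr (1 / (real k - 1))"
proof -
  have kp: "real k > 0" using assms by simp
  consider "x < 0" | "0 \<le> x" "x \<le> real k / n" | "x > real k / n" by linarith
  then show ?thesis
  proof cases
    case 1
    then have "n * x < 0" using assms by (simp add: mult_pos_neg)
    then have "n / real k * x < 0" using kp by (simp add: divide_neg_pos)
    then show ?thesis using 1 by (simp add: Fk_def)
  next
    case 2
    then have "n / real k * x \<le> 1" "0 \<le> n / real k * x" using assms kp
      by (auto simp: field_simps)
    then show ?thesis using 2 by (simp add: Fk_def)
  next
    case 3
    then have "n / real k * x > 1" using assms kp by (auto simp: field_simps)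
    moreover have "real k / n > 0" using assms kp by simp
    then have "\<not> x < 0" using 3 by linarith
    ultimately show ?thesis using 3 assms kp by (simp add: Fk_def)
  qed
qed

lemma Fk_cont:
  assumes "k \<ge> 2" "n > 0"
  shows "isCont (Fk k n) x"
proof -
  have e: "Fk k n = (\<lambda>x. (min 1 (max 0 (n / real k * x))) powr (1 / (real k - 1)))"
    using Fk_alt[OF assms] by auto
  have "((\<lambda>x. (min 1 (max 0 (n / real k * x))) powr (1 / (real k - 1))) \<longlongrightarrow>
        (min 1 (max 0 (n / real k * x))) powr (1 / (real k - 1))) (at x)"
    apply (rule tendsto_powr2)
    using assms by (auto intro!: tendsto_intros)
  then show ?thesis unfolding e isCont_def .
qed

lemma Fk_pow:
  assumes "k \<ge> 2" "n > 0"
  shows "Fk k n x ^ (k - 1) = min 1 (max 0 (n / real k * x))"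
proof -
  define y where "y = min 1 (max 0 (n / real k * x))"
  have y: "0 \<le> y" by (simp add: y_def)
  have "(y powr (1 / (real k - 1))) ^ (k - 1) = y"
  proof (cases "y = 0")
    case True then show ?thesis using assms by simp
  next
    case False
    then have "y > 0" using y by simp
    then have "(y powr (1 / (real k - 1))) ^ (k - 1) = (y powr (1 / (real k - 1))) powr (real (k-1))"
      by (simp add: powr_realpow)
    also have "\<dots> = y" using assms y by (simp add: powr_powr of_nat_diff)
    finally show ?thesis .
  qed
  then show ?thesis using Fk_alt[OF assms] y_def by simp
qed

lemma comp_meas:
  fixes D :: "('m::finite \<Rightarrow> real) measure"
  assumes "sets D = sets (PiM UNIV (\<lambda>_::'m. borel))"
  shows "(\<lambda>b. b i) \<in> borel_measurable D"
proof -
  have "(\<lambda>b. b i) \<in> borel_measurable (PiM UNIV (\<lambda>_::'m. borel))" by measurable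
  then show ?thesis using measurable_cong_sets[OF assms refl, of borel] by blast
qed

lemma point_null:
  fixes D :: "('m::finite \<Rightarrow> real) measure"
  assumes k: "k \<ge> 2" and n: "n > 0"
    and P: "prob_space D"
    and S: "sets D = sets (PiM UNIV (\<lambda>_::'m. borel))"
    and F: "\<forall>i x. measure D {b \<in> space D. b i \<le> x} = Fk k n x"
  shows "measure D {b \<in> space D. b i = x} = 0"
proof -
  interpret prob_space D by (rule P)
  have bm[measurable]: "(\<lambda>b. b i) \<in> borel_measurable D" by (rule comp_meas[OF S])
  define A where "A N = {b \<in> space D. b i \<le> x - 1 / Suc N}" for N :: nat
  have ms: "{b \<in> space D. b i \<le> y} \<in> sets D" for y by measurable
  have As: "range A \<subseteq> sets D" unfolding A_def using ms by auto
  have inc: "incseq A"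
    unfolding A_def incseq_def
    by (auto simp: frac_le intro: order_trans)
  have U: "(\<Union>N. A N) = {b \<in> space D. b i < x}"
  proof safe
    fix b assume "b \<in> space D" "b i < x"
    then obtain N where "1 / Suc N < x - b i"
      by (metis diff_gt_0_iff_gt nat_approx_posE)
    then have "b \<in> A N" using \<open>b \<in> space D\<close> unfolding A_def by auto
    then show "b \<in> (\<Union>N. A N)" by blast
  next
    fix b N assume "b \<in> A N"
    then have h: "b \<in> space D" "b i \<le> x - 1 / real (Suc N)" unfolding A_def by auto
    have "1 / real (Suc N) > 0" by simp
    then show "b \<in> space D" "b i < x" using h by linarith+
  qed
  have L1: "(\<lambda>N. measure D (A N)) \<longlonglongrightarrow> measure D {b \<in> space D. b i < x}"
    using finite_Lim_measure_incseq[OF As inc] U by simp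
  have "(\<lambda>N. x - 1 / Suc N) \<longlonglongrightarrow> x - 0"
    by (intro tendsto_intros LIMSEQ_Suc[OF lim_const_over_n])
  then have "(\<lambda>N. Fk k n (x - 1 / Suc N)) \<longlonglongrightarrow> Fk k n x"
    using isCont_tendsto_compose[OF Fk_cont[OF k n]] by simp
  then have L2: "(\<lambda>N. measure D (A N)) \<longlonglongrightarrow> Fk k n x"
    unfolding A_def using F by simp
  have eq: "measure D {b \<in> space D. b i < x} = Fk k n x"
    using LIMSEQ_unique[OF L1 L2] .
  have "{b \<in> space D. b i = x} = {b \<in> space D. b i \<le> x} - {b \<in> space D. b i < x}"
    by auto
  then have "measure D {b \<in> space D. b i = x} = measure D {b \<in> space D. b i \<le> x} - measure D {b \<in> space D. b i < x}"
  proof -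
    have "{b \<in> space D. b i \<le> x} \<inter> {b \<in> space D. b i < x} = {b \<in> space D. b i < x}" by auto
    moreover have "{b \<in> space D. b i \<le> x} \<in> sets D" "{b \<in> space D. b i < x} \<in> sets D" by measurable
    ultimately show ?thesis using \<open>{b \<in> space D. b i = x} = _\<close> by (simp add: finite_measure_Diff')
  qed
  then show ?thesis using eq F by simp
qed

lemma card_sum_real: "real (card {j. j < (r::nat) \<and> P j}) = (\<Sum>j<r. if P j then 1 else 0)"
proof -
  have "{j. j < r \<and> P j} = {j \<in> {..<r}. P j}" by auto
  then have "real (card {j. j < r \<and> P j}) = (\<Sum>j\<in>{j \<in> {..<r}. P j}. 1)" by simp
  also have "\<dots> = (\<Sum>j<r. if P j then 1 else 0)" by (rule sum.inter_filter) simp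
  finally show ?thesis .
qed

lemma ws_alt: "win_share r a bids =
   (if (\<forall>j\<in>{..<r}. bids j \<le> a) then 1 / (1 + (\<Sum>j<r. if bids j = a then 1 else 0)) else 0)"
  unfolding win_share_def card_sum_real by auto

lemma PiM_comp_meas:
  fixes D :: "('m::finite \<Rightarrow> real) measure"
  assumes "sets D = sets (PiM UNIV (\<lambda>_::'m. borel))"
  shows "(\<lambda>\<omega>. \<omega> j i) \<in> borel_measurable (PiM I (\<lambda>_::nat. D))"
proof (cases "j \<in> I")
  case True
  show ?thesis
    by (rule measurable_compose[OF measurable_component_singleton[OF True] comp_meas[OF assms]])
next
  case False
  have "(\<lambda>\<omega>. undefined i :: real) \<in> borel_measurable (PiM I (\<lambda>_::nat. D))" by simp
  moreover have "\<omega> \<in> space (PiM I (\<lambda>_::nat. D)) \<Longrightarrow> \<omega> j i = undefined i" for \<omega>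
    using False by (auto simp: space_PiM PiE_def extensional_def)
  ultimately show ?thesis using measurable_cong by (smt (verit))
qed

lemma ws_meas:
  fixes D :: "('m::finite \<Rightarrow> real) measure"
  assumes "sets D = sets (PiM UNIV (\<lambda>_::'m. borel))"
  shows "(\<lambda>\<omega>. win_share r a (\<lambda>j. c * \<omega> j i)) \<in> borel_measurable (PiM I (\<lambda>_::nat. D))"
proof -
  note [measurable] = PiM_comp_meas[OF assms]
  show ?thesis unfolding ws_alt by measurable
qed

lemma per_group:
  fixes D :: "('m::finite \<Rightarrow> real) measure"
  assumes k: "k \<ge> 2" and n: "n > 0"
    and P: "prob_space D"
    and S: "sets D = sets (PiM UNIV (\<lambda>_::'m. borel))"
    and F: "\<forall>i x. measure D {b \<in> space D. b i \<le> x} = Fk k n x"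
    and c: "c > 0"
  shows "(\<integral>\<omega>. win_share (k-1) a (\<lambda>j. c * \<omega> j i) \<partial>(PiM {..<k-1} (\<lambda>_. D))) = Fk k n (a / c) ^ (k - 1)"
proof -
  define r where "r = k - 1"
  define M where "M = PiM {..<r} (\<lambda>_::nat. D)"
  define x where "x = a / c"
  interpret D: prob_space D by (rule P)
  interpret PP: product_prob_space "\<lambda>_::nat. D" "{..<r}"
    unfolding product_prob_space_def product_prob_space_axioms_def product_sigma_finite_def
    using P D.sigma_finite_measure_axioms by auto
  interpret M: prob_space M unfolding M_def by (rule prob_space_PiM) (rule P)
  have bm[measurable]: "(\<lambda>b. b i) \<in> borel_measurable D" by (rule comp_meas[OF S])
  define B where "B = {b \<in> space D. b i \<le> x}"
  define SS where "SS = PiE {..<r} (\<lambda>_. B)"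
  have Bs: "B \<in> sets D" unfolding B_def by measurable
  have SSs: "SS \<in> sets M" unfolding SS_def M_def using Bs by (intro sets_PiM_I_finite) auto
  have gm: "(\<lambda>\<omega>. win_share r a (\<lambda>j. c * \<omega> j i)) \<in> borel_measurable M"
    unfolding M_def by (rule ws_meas[OF S])
  have AEne: "AE \<omega> in M. \<forall>j\<in>{..<r}. \<omega> j i \<noteq> x"
  proof (rule AE_finite_allI)
    fix j assume j: "j \<in> {..<r}"
    define N where "N = PiE {..<r} (\<lambda>l. if l = j then {b\<in>space D. b i = x} else space D)"
    have e0: "emeasure D {b\<in>space D. b i = x} = 0"
      using point_null[OF k n P S F, of i x] D.emeasure_eq_measure by simp
    have Ns: "N \<in> sets M" unfolding N_def M_def
      by (intro sets_PiM_I_finite) auto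
    have "emeasure M N = (\<Prod>l\<in>{..<r}. emeasure D (if l = j then {b\<in>space D. b i = x} else space D))"
      unfolding N_def M_def by (rule PP.emeasure_PiM) auto
    also have "\<dots> = 0" using j e0 by (intro prod_zero) auto
    finally have "N \<in> null_sets M" using Ns by auto
    moreover have "{\<omega> \<in> space M. \<not> \<omega> j i \<noteq> x} \<subseteq> N"
      unfolding N_def M_def by (auto simp: space_PiM PiE_iff extensional_def)
    ultimately show "AE \<omega> in M. \<omega> j i \<noteq> x" by (rule AE_I')
  qed simp
  have AEeq: "AE \<omega> in M. win_share r a (\<lambda>j. c * \<omega> j i) = indicator SS \<omega>"
    using AEne
  proof (rule AE_mp, intro AE_I2 impI)
    fix \<omega> assume sp: "\<omega> \<in> space M" and ne: "\<forall>j\<in>{..<r}. \<omega> j i \<noteq> x"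
    have le: "c * \<omega> j i \<le> a \<longleftrightarrow> \<omega> j i \<le> x" for j
      unfolding x_def using c by (simp add: pos_le_divide_eq mult.commute)
    have eq: "j \<in> {..<r} \<Longrightarrow> c * \<omega> j i \<noteq> a" for j
      using ne c unfolding x_def by (auto simp: field_simps)
    have sp': "\<omega> \<in> PiE {..<r} (\<lambda>_. space D)" using sp unfolding M_def by (simp add: space_PiM)
    show "win_share r a (\<lambda>j. c * \<omega> j i) = indicator SS \<omega>"
      unfolding ws_alt le using eq sp' by (auto simp: SS_def B_def PiE_iff indicator_def)
  qed
  have "(\<integral>\<omega>. win_share r a (\<lambda>j. c * \<omega> j i) \<partial>M) = (\<integral>\<omega>. indicator SS \<omega> \<partial>M)"
    by (rule integral_cong_AE[OF gm _ AEeq]) (use SSs in simp)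
  also have "\<dots> = measure M SS" using SSs by simp
  also have "\<dots> = Fk k n x ^ r"
  proof -
    have "emeasure M SS = (\<Prod>l\<in>{..<r}. emeasure D B)"
      unfolding SS_def M_def by (rule PP.emeasure_PiM) (auto simp: Bs)
    also have "\<dots> = (\<Prod>l\<in>{..<r}. ennreal (Fk k n x))"
      using F D.emeasure_eq_measure unfolding B_def by simp
    also have "\<dots> = ennreal (Fk k n x ^ r)"
      using F[rule_format, of i x, symmetric] by (simp add: ennreal_power)
    finally show ?thesis using M.emeasure_eq_measure F[rule_format, of i x, symmetric]
      by simp
  qed
  finally show ?thesis unfolding r_def M_def x_def .
qed

lemma ws_bounds: "0 \<le> win_share r a bids" "win_share r a bids \<le> 1"
  unfolding win_share_def by auto

lemma eo_closed:
  fixes nv :: "'m::finite \<Rightarrow> real" and k :: nat and D :: "('m \<Rightarrow> real) measure"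
  assumes k: "k \<ge> 2"
    and nv: "\<forall>i. nv i > 0"
    and P: "prob_space D"
    and S: "sets D = sets (PiM UNIV (\<lambda>_::'m. borel))"
    and F: "\<forall>i x. measure D {b \<in> space D. b i \<le> x} = Fk k (\<Sum>i\<in>UNIV. nv i) x"
  shows "expected_objects k nv D a =
     (\<Sum>i\<in>UNIV. nv i * min 1 (max 0 ((\<Sum>i\<in>UNIV. nv i) / real k * (a i / nv i))))"
proof -
  define n where "n = (\<Sum>i\<in>UNIV. nv i)"
  have n: "n > 0" unfolding n_def using nv by (simp add: sum_pos)
  define M where "M = PiM {..<k-1} (\<lambda>_::nat. D)"
  interpret M: prob_space M unfolding M_def by (rule prob_space_PiM) (rule P)
  have int: "integrable M (\<lambda>\<omega>. nv i * win_share (k - 1) (a i) (\<lambda>j. nv i * \<omega> j i))" for i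
  proof (intro integrable_mult_right M.integrable_const_bound[where B=1])
    show "AE x in M. norm (win_share (k - 1) (a i) (\<lambda>j. nv i * x j i)) \<le> 1"
      using ws_bounds by (simp add: abs_le_iff)
    show "(\<lambda>\<omega>. win_share (k - 1) (a i) (\<lambda>j. nv i * \<omega> j i)) \<in> borel_measurable M"
      unfolding M_def by (rule ws_meas[OF S])
  qed
  have "expected_objects k nv D a = (\<Sum>i\<in>UNIV. \<integral>\<omega>. nv i * win_share (k - 1) (a i) (\<lambda>j. nv i * \<omega> j i) \<partial>M)"
    unfolding expected_objects_def M_def[symmetric] by (intro Bochner_Integration.integral_sum int)
  also have "\<dots> = (\<Sum>i\<in>UNIV. nv i * Fk k n (a i / nv i) ^ (k - 1))"
    using per_group[OF k n P S F[unfolded n_def[symmetric]]] nv unfolding M_def by simp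
  also have "\<dots> = (\<Sum>i\<in>UNIV. nv i * min 1 (max 0 (n / real k * (a i / nv i))))"
    using Fk_pow[OF k n] by (simp add: mult.commute)
  finally show ?thesis unfolding n_def .
qed

theorem lemma5p2:
  fixes nv :: "'m::finite \<Rightarrow> real" and k :: nat and D :: "('m \<Rightarrow> real) measure"
  assumes "k \<ge> 2"
    and "\<forall>i. nv i > 0"
    and "prob_space D"
    and "sets D = sets (PiM UNIV (\<lambda>_::'m. borel))"
    and "\<forall>i x. measure D {b \<in> space D. b i \<le> x} = Fk k (\<Sum>i\<in>UNIV. nv i) x"
    and "AE b in D. (\<Sum>i\<in>UNIV. nv i * b i) = 1"
  shows "(\<forall>A. adversary_strategy A \<longrightarrow>
            (\<integral>a. expected_objects k nv D a \<partial>A) \<le> (\<Sum>i\<in>UNIV. nv i) / real k)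
       \<and> (\<exists>A. adversary_strategy A \<and>
            (\<integral>a. expected_objects k nv D a \<partial>A) = (\<Sum>i\<in>UNIV. nv i) / real k)"
proof -
  define n where "n = (\<Sum>i\<in>UNIV. nv i)"
  have n: "n > 0" unfolding n_def using assms(2) by (simp add: sum_pos)
  have kp: "real k > 0" using assms(1) by simp
  define g where "g a = (\<Sum>i\<in>UNIV. nv i * min 1 (max 0 (n / real k * (a i / nv i))))" for a :: "'m \<Rightarrow> real"
  have EO: "expected_objects k nv D = g"
    unfolding g_def n_def using eo_closed[OF assms(1-5)] by auto
  have gm: "g \<in> borel_measurable (PiM UNIV (\<lambda>_::'m. borel))"
    unfolding g_def by measurable
  have gb: "\<bar>g a\<bar> \<le> n" for a
  proof -
    have "0 \<le> g a" unfolding g_def using assms(2) by (intro sum_nonneg mult_nonneg_nonneg) (auto simp: less_imp_le)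
    moreover have "g a \<le> (\<Sum>i\<in>UNIV. nv i * 1)" unfolding g_def using assms(2)
      by (intro sum_mono mult_left_mono) (auto simp: less_imp_le)
    ultimately show ?thesis unfolding n_def by simp
  qed
  have gf: "g a \<le> n / real k" if "feasible_bid a" for a
  proof -
    have a0: "0 \<le> a i" for i using that unfolding feasible_bid_def by auto
    have "g a \<le> (\<Sum>i\<in>UNIV. nv i * (n / real k * (a i / nv i)))" unfolding g_def
    proof (intro sum_mono mult_left_mono)
      fix i
      have "0 \<le> n / real k * (a i / nv i)" using a0[of i] n kp assms(2)[rule_format, of i]
        by (intro mult_nonneg_nonneg divide_nonneg_pos) auto
      then show "min 1 (max 0 (n / real k * (a i / nv i))) \<le> n / real k * (a i / nv i)" by simp
      show "0 \<le> nv i" using assms(2) less_imp_le by blast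
    qed
    also have "\<dots> = n / real k * (\<Sum>i\<in>UNIV. a i)"
      using assms(2) by (simp add: sum_distrib_left) (metis less_numeral_extra(3))
    also have "\<dots> \<le> n / real k * 1" using that n kp unfolding feasible_bid_def
      by (intro mult_left_mono) auto
    finally show ?thesis by simp
  qed
  have part1: "(\<integral>a. g a \<partial>A) \<le> n / real k" if A: "adversary_strategy A" for A
  proof -
    interpret A: prob_space A using A unfolding adversary_strategy_def by auto
    have sA: "sets A = sets (PiM UNIV (\<lambda>_::'m. borel))" using A unfolding adversary_strategy_def by auto
    have gmA: "g \<in> borel_measurable A" using gm measurable_cong_sets[OF sA refl, of borel] by blast
    have "(\<integral>a. g a \<partial>A) \<le> (\<integral>a. n / real k \<partial>A)"
    proof (rule integral_mono_AE)
      show "integrable A g" using gmA gb by (intro A.integrable_const_bound[where B=n]) auto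
      show "integrable A (\<lambda>a. n / real k)" by simp
      show "AE a in A. g a \<le> n / real k"
        using A unfolding adversary_strategy_def using gf by (auto elim: AE_mp)
    qed
    then show ?thesis using A.prob_space by simp
  qed
  define astar where "astar = (\<lambda>i. nv i / n)"
  define A where "A = return (PiM UNIV (\<lambda>_::'m. borel)) astar"
  have sp: "astar \<in> space (PiM UNIV (\<lambda>_::'m. borel))" by (simp add: space_PiM)
  have fm: "Measurable.pred (PiM UNIV (\<lambda>_::'m. borel)) feasible_bid"
    unfolding feasible_bid_def by measurable
  have fa: "feasible_bid astar"
    unfolding feasible_bid_def astar_def using n assms(2)
    by (auto simp: less_imp_le sum_divide_distrib[symmetric] n_def)
  have strat: "adversary_strategy A"
    unfolding adversary_strategy_def A_def
    using prob_space_return[OF sp] AE_return[OF sp fm] fa by simp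
  have "g astar = (\<Sum>i\<in>UNIV. nv i * (1 / real k))"
    unfolding g_def astar_def
  proof (intro sum.cong refl)
    fix i
    have "n / real k * (nv i / n / nv i) = 1 / real k" using n assms(2) by (simp add: less_imp_neq[symmetric] field_simps)
    moreover have "1 / real k \<le> 1" using assms(1) by simp
    moreover have "0 \<le> 1 / real k" by simp
    ultimately show "nv i * min 1 (max 0 (n / real k * (nv i / n / nv i))) = nv i * (1 / real k)"
      by (simp only: min_def max_def) auto
  qed
  also have "\<dots> = n / real k" unfolding n_def by (simp add: sum_divide_distrib)
  finally have "(\<integral>a. g a \<partial>A) = n / real k"
    unfolding A_def using integral_return[OF sp gm] by simp
  then show ?thesis using part1 strat unfolding EO n_def by auto
qed

end
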